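(* Let $g:\mathbb R\times\mathbb R_+\to\mathbb R_+$ be non-decreasing and locally Lipschitz in each of its variables, with $g(0,0)=0$ and $\int_1^\infty s^{-1-p}g(s,s^{p/q})\,ds<\infty$ for some $p,q>0$. Let $u:\Omega\to\mathbb R$ and $v:\Omega\to\mathbb R_+$ be measurable; for $s>0$ and $w\in\{u,v\}$ set $E_w(s):=\{x\in\Omega:|w(x)|>s\}$ and $e_w(s):=\int_{E_w(s)}\phi_\mu\,dx$. Assume there are constants $C_u,C_v>0$ such that $e_u(s)\le C_us^{-p}$ and $e_v(s)\le C_vs^{-q}$ for all $s>0$. Then for every $s_0>0$, $$\|g(u,v)\|_{L^1(\Omega;\phi_\mu)}\le\int_{E_u^c(s_0)\cap E_v^c(s_0^{p/q})}g(u,v)\phi_\mu\,dx+2p(C_u+C_v)\int_{s_0}^\infty s^{-1-p}g(s,s^{p/q})\,ds.$$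
   Context: $\Omega\subset\mathbb R^N$ ($N\ge3$) is a bounded $C^2$ domain, $\Sigma\subset\partial\Omega$ a compact $C^2$ submanifold without boundary of dimension $k$, $d_\Sigma=\mathrm{dist}(\cdot,\Sigma)$, $\mu\le((N-k)/2)^2$, $L_\mu=\Delta+\mu d_\Sigma^{-2}$ with positive first Dirichlet eigenvalue $\lambda_\mu$, and $\phi_\mu>0$ the associated first eigenfunction; $L^1(\Omega;\phi_\mu)$ is the $L^1$ space with weight $\phi_\mu\,dx$. Complements $E^c$ are taken in $\Omega$. *)

theory Defs
  imports "HOL-Analysis.Analysis"
begin

definition loc_lipschitz_on :: "real set \<Rightarrow> (real \<Rightarrow> real) \<Rightarrow> bool" where
  "loc_lipschitz_on S f \<longleftrightarrow>
     (\<forall>x\<in>S. \<exists>e>0. \<exists>L. L-lipschitz_on (cball x e \<inter> S) f)"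

definition Eset :: "'a set \<Rightarrow> ('a \<Rightarrow> real) \<Rightarrow> real \<Rightarrow> 'a set" where
  "Eset \<Omega> w s = {x\<in>\<Omega>. \<bar>w x\<bar> > s}"

definition eset :: "'a::euclidean_space set \<Rightarrow> ('a \<Rightarrow> real) \<Rightarrow> ('a \<Rightarrow> real) \<Rightarrow> real \<Rightarrow> ennreal" where
  "eset \<Omega> \<phi> w s = (\<integral>\<^sup>+ x \<in> Eset \<Omega> w s. ennreal (\<phi> x) \<partial>lebesgue)"

end

theory Submission
  imports Defs
begin

lemma nn_integral_split_nonmeas:
  assumes A: "A \<in> sets M" and h: "h \<in> borel_measurable M"
    and le: "\<And>x. F x \<le> f x * indicator A x + indicator (space M - A) x * h x"
  shows "integral\<^sup>N M F \<le> (\<integral>\<^sup>+ x. f x * indicator A x \<partial>M) + integral\<^sup>N M h"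
  unfolding nn_integral_def[of M F]
proof (rule SUP_least)
  fix s assume "s \<in> {g. simple_function M g \<and> g \<le> F}"
  then have s: "simple_function M s" "s \<le> F" by auto
  have sm: "s \<in> borel_measurable M" using s(1) by (rule borel_measurable_simple_function)
  have "integral\<^sup>S M s = integral\<^sup>N M s" using nn_integral_eq_simple_integral[OF s(1)] by simp
  also have "\<dots> = (\<integral>\<^sup>+ x. s x * indicator A x + s x * indicator (space M - A) x \<partial>M)"
    by (rule nn_integral_cong) (auto simp: indicator_def)
  also have "\<dots> = (\<integral>\<^sup>+ x. s x * indicator A x \<partial>M) + (\<integral>\<^sup>+ x. s x * indicator (space M - A) x \<partial>M)"
    using A sm by (intro nn_integral_add) auto
  also have "\<dots> \<le> (\<integral>\<^sup>+ x. f x * indicator A x \<partial>M) + integral\<^sup>N M h"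
  proof (intro add_mono nn_integral_mono)
    fix x
    have "s x \<le> F x" using s(2) by (auto simp: le_fun_def)
    then show "s x * indicator A x \<le> f x * indicator A x"
      using le[of x] A sets.sets_into_space by (auto simp: indicator_def)
    show "s x * indicator (space M - A) x \<le> h x"
      using le[of x] \<open>s x \<le> F x\<close> by (auto simp: indicator_def)
  qed
  finally show "integral\<^sup>S M s \<le> (\<integral>\<^sup>+ x. f x * indicator A x \<partial>M) + integral\<^sup>N M h" .
qed

lemma tail_int:
  fixes p a :: real assumes p: "p > 0" and a: "a > 0"
  shows "(\<integral>\<^sup>+s. ennreal (p * s powr (-1-p)) * indicator {a ..} s \<partial>lborel) = ennreal (a powr -p)"
proof -
  have "(\<integral>\<^sup>+s. ennreal (p * s powr (-1-p)) * indicator {a ..} s \<partial>lborel) = ennreal (0 - (- (a powr -p)))"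
  proof (rule nn_integral_FTC_atLeast)
    show "(\<lambda>s. p * s powr (-1-p)) \<in> borel_measurable borel" by measurable
    fix x assume x: "a \<le> x"
    then have "x > 0" using a by simp
    have "((\<lambda>s. s powr -p) has_real_derivative (-p) * x powr (-p - 1)) (at x)"
      using has_real_derivative_powr[OF \<open>x > 0\<close>, of "-p"] by simp
    then have "((\<lambda>s. - (s powr -p)) has_real_derivative - ((-p) * x powr (-p - 1))) (at x)"
      by (rule DERIV_minus)
    moreover have e: "-p - 1 = -1 - p" by simp
    ultimately show "((\<lambda>s. - (s powr -p)) has_real_derivative p * x powr (-1-p)) (at x)"
      by (simp only: e minus_mult_minus minus_minus mult_minus_left)
    show "0 \<le> p * x powr (-1-p)" using p by simp
  next
    have "((\<lambda>s. s powr -p) \<longlongrightarrow> 0) at_top"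
      using p by (intro tendsto_neg_powr filterlim_ident) auto
    then show "((\<lambda>s. - (s powr -p)) \<longlongrightarrow> 0) at_top"
      using tendsto_minus by fastforce
  qed
  then show ?thesis by simp
qed

lemma layer_bound:
  fixes W \<Phi> :: "'a::euclidean_space \<Rightarrow> real" and Gm :: "real \<Rightarrow> real" and S :: "'a set"
  assumes Wm[measurable]: "W \<in> borel_measurable lebesgue"
    and Pm[measurable]: "\<Phi> \<in> borel_measurable lebesgue"
    and Sm[measurable]: "S \<in> sets lebesgue"
    and P0: "\<And>x. x \<in> S \<Longrightarrow> \<Phi> x \<ge> 0"
    and SW: "\<And>x. x \<in> S \<Longrightarrow> W x > s0"
    and Gmono: "mono Gm" and G0: "\<And>t. Gm t \<ge> 0"
    and s0: "s0 > 0" and p: "p > 0" and C: "C \<ge> 0"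
    and tail: "\<And>b. b > 0 \<Longrightarrow> (\<integral>\<^sup>+ x. indicator S x * ennreal (\<Phi> x) * indicator {x. W x > b} x \<partial>lebesgue) \<le> ennreal (C * b powr -p)"
  shows "(\<integral>\<^sup>+ x. indicator S x * ennreal (Gm (W x) * \<Phi> x) \<partial>lebesgue)
     \<le> ennreal (p * C) * (\<integral>\<^sup>+ s. indicator {s0<..} s * ennreal (s powr (-1-p) * Gm s) \<partial>lborel)"
proof -
  have Gm_meas[measurable]: "Gm \<in> borel_measurable borel" using Gmono by (rule borel_measurable_mono)
  define dens where "dens x = indicator S x * ennreal (\<Phi> x)" for x
  have dm[measurable]: "dens \<in> borel_measurable lebesgue" unfolding dens_def by measurable
  define M where "M = density lebesgue dens"
  have sM[simp]: "sets M = sets lebesgue" "space M = UNIV" unfolding M_def by auto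
  have WM[measurable]: "W \<in> borel_measurable M"
    using Wm by (simp add: measurable_cong_sets[OF sM(1) refl])
  have eM: "emeasure M X = (\<integral>\<^sup>+ x. dens x * indicator X x \<partial>lebesgue)" if "X \<in> sets lebesgue" for X
    unfolding M_def using that by (intro emeasure_density) auto
  have "emeasure M (space M) = (\<integral>\<^sup>+ x. indicator S x * ennreal (\<Phi> x) * indicator {x. W x > s0} x \<partial>lebesgue)"
    by (simp add: eM dens_def) (intro nn_integral_cong, auto simp: indicator_def SW)
  also have "\<dots> \<le> ennreal (C * s0 powr -p)" using tail s0 by simp
  finally have "emeasure M (space M) \<noteq> \<infinity>" by (auto simp: top_unique)
  then interpret Mf: finite_measure M by (rule finite_measureI)
  interpret P: pair_sigma_finite M lborel
    by (intro pair_sigma_finite.intro Mf.sigma_finite_measure_axioms sigma_finite_lborel)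
  define K where "K s l = indicator {s0<..} s * ennreal (p * s powr (-1-p)) * (indicator {0..<Gm s} l :: ennreal)" for s l
  have step_a: "(\<integral>\<^sup>+ x. indicator S x * ennreal (Gm (W x) * \<Phi> x) \<partial>lebesgue) = (\<integral>\<^sup>+ x. ennreal (Gm (W x)) \<partial>M)"
    unfolding M_def by (subst nn_integral_density) (auto intro!: nn_integral_cong simp: dens_def indicator_def P0 G0 ennreal_mult mult.commute)
  also have "\<dots> = (\<integral>\<^sup>+ x. (\<integral>\<^sup>+ l. indicator {0..<Gm (W x)} l \<partial>lborel) \<partial>M)"
    by (intro nn_integral_cong) (simp add: G0)
  also have "\<dots> = (\<integral>\<^sup>+ l. (\<integral>\<^sup>+ x. indicator {0..<Gm (W x)} l \<partial>M) \<partial>lborel)"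
  proof (rule P.Fubini'[symmetric])
    have "(\<lambda>(x, l). indicator {0..<Gm (W x)} l :: ennreal) = (\<lambda>xl. if 0 \<le> snd xl \<and> snd xl < Gm (W (fst xl)) then 1 else 0)"
      by (auto simp: indicator_def fun_eq_iff)
    also have "\<dots> \<in> borel_measurable (M \<Otimes>\<^sub>M lborel)" by measurable
    finally show "(\<lambda>(x, l). indicator {0..<Gm (W x)} l :: ennreal) \<in> borel_measurable (M \<Otimes>\<^sub>M lborel)" .
  qed
  also have "\<dots> \<le> (\<integral>\<^sup>+ l. ennreal C * (\<integral>\<^sup>+ s. K s l \<partial>lborel) \<partial>lborel)"
  proof (rule nn_integral_mono)
    fix l :: real
    show "(\<integral>\<^sup>+ x. indicator {0..<Gm (W x)} l \<partial>M) \<le> ennreal C * (\<integral>\<^sup>+ s. K s l \<partial>lborel)"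
    proof -
      define X where "X = {x. 0 \<le> l \<and> l < Gm (W x)}"
      have Xeq: "X = {x \<in> space lebesgue. 0 \<le> l \<and> l < Gm (W x)}" unfolding X_def by simp
      have Xm: "X \<in> sets lebesgue" unfolding Xeq by measurable
      have "(\<integral>\<^sup>+ x. indicator {0..<Gm (W x)} l \<partial>M) = (\<integral>\<^sup>+ x. indicator X x \<partial>M)"
        by (intro nn_integral_cong) (auto simp: X_def indicator_def)
      also have "\<dots> = emeasure M X" using Xm by simp
      also have "\<dots> = (\<integral>\<^sup>+ x. dens x * indicator X x \<partial>lebesgue)" using Xm by (rule eM)
      finally have L: "(\<integral>\<^sup>+ x. indicator {0..<Gm (W x)} l \<partial>M) = (\<integral>\<^sup>+ x. dens x * indicator X x \<partial>lebesgue)" .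
      define T where "T = {s. s0 < s \<and> l < Gm s}"
      show ?thesis
      proof (cases "l \<ge> 0 \<and> T \<noteq> {}")
        case False
        have z: "dens x * indicator X x = 0" for x
        proof (cases "x \<in> S \<and> x \<in> X")
          case True
          then have "W x \<in> T" "0 \<le> l" using SW by (auto simp: X_def T_def)
          then show ?thesis using False by auto
        qed (auto simp: dens_def indicator_def)
        have "(\<integral>\<^sup>+ x. dens x * indicator X x \<partial>lebesgue) = (\<integral>\<^sup>+ x. 0 \<partial>(lebesgue :: 'a measure))"
          by (rule nn_integral_cong) (rule z)
        then show ?thesis unfolding L by simp
      next
        case True
        then have l0: "0 \<le> l" and Tne: "T \<noteq> {}" by auto
        define a where "a = Inf T"
        have bdd: "bdd_below T" unfolding T_def by (rule bdd_belowI[of _ s0]) auto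
        have a_ge: "s0 \<le> a" unfolding a_def using Tne by (intro cInf_greatest) (auto simp: T_def)
        then have a0: "a > 0" using s0 by simp
        have Tlow: "a \<le> t" if "t \<in> T" for t unfolding a_def by (rule cInf_lower[OF that bdd])
        have Tup: "s \<in> T" if sa: "s > a" for s
        proof -
          obtain t where t: "t \<in> T" "t < s" using cInf_less_iff[OF Tne bdd, of s] sa a_def by auto
          have "Gm t \<le> Gm s" using t(2) by (intro monoD[OF Gmono]) simp
          then show ?thesis using t by (auto simp: T_def)
        qed
        have R: "ennreal (a powr -p) \<le> (\<integral>\<^sup>+ s. K s l \<partial>lborel)"
        proof -
          have "ennreal (a powr -p) = (\<integral>\<^sup>+s. ennreal (p * s powr (-1-p)) * indicator {a ..} s \<partial>lborel)"
            using tail_int[OF p a0] by simp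
          also have "\<dots> \<le> (\<integral>\<^sup>+ s. K s l \<partial>lborel)"
          proof (rule nn_integral_mono_AE)
            show "AE s in lborel. ennreal (p * s powr (-1-p)) * indicator {a ..} s \<le> K s l"
              using AE_lborel_singleton[of a]
            proof eventually_elim
              case (elim s)
              show ?case
              proof (cases "a \<le> s")
                case True
                then have "s \<in> T" using elim by (intro Tup) auto
                then show ?thesis using l0 by (auto simp: K_def T_def indicator_def)
              qed (auto simp: indicator_def)
            qed
          qed
          finally show ?thesis .
        qed
        have Lb: "(\<integral>\<^sup>+ x. dens x * indicator X x \<partial>lebesgue) \<le> ennreal (C * b powr -p)" if b: "0 < b" "b < a" for b
        proof -
          have "(\<integral>\<^sup>+ x. dens x * indicator X x \<partial>lebesgue) \<le> (\<integral>\<^sup>+ x. indicator S x * ennreal (\<Phi> x) * indicator {x. W x > b} x \<partial>lebesgue)"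
          proof (rule nn_integral_mono)
            fix x
            show "dens x * indicator X x \<le> indicator S x * ennreal (\<Phi> x) * indicator {x. W x > b} x"
            proof (cases "x \<in> S \<and> x \<in> X")
              case True
              then have "W x \<in> T" using SW by (auto simp: X_def T_def)
              then have "W x > b" using Tlow[of "W x"] b by linarith
              then show ?thesis using True by (auto simp: dens_def indicator_def)
            qed (auto simp: dens_def indicator_def)
          qed
          also have "\<dots> \<le> ennreal (C * b powr -p)" using tail b by simp
          finally show ?thesis .
        qed
        have Lc: "(\<integral>\<^sup>+ x. dens x * indicator X x \<partial>lebesgue) \<le> ennreal (C * a powr -p)"
        proof (rule tendsto_le[of "at_left a"])
          show "at_left a \<noteq> bot" by simp
          have "((\<lambda>b. C * b powr -p) \<longlongrightarrow> C * a powr -p) (at_left a)"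
            using a0 by (intro tendsto_intros) auto
          then show "((\<lambda>b. ennreal (C * b powr -p)) \<longlongrightarrow> ennreal (C * a powr -p)) (at_left a)"
            by (rule tendsto_ennrealI)
          show "((\<lambda>b. (\<integral>\<^sup>+ x. dens x * indicator X x \<partial>lebesgue)) \<longlongrightarrow> (\<integral>\<^sup>+ x. dens x * indicator X x \<partial>lebesgue)) (at_left a)"
            by simp
          show "\<forall>\<^sub>F b in at_left a. (\<integral>\<^sup>+ x. dens x * indicator X x \<partial>lebesgue) \<le> ennreal (C * b powr -p)"
            using eventually_at_left_real[OF a0] by eventually_elim (rule Lb; simp)
        qed
        also have "\<dots> = ennreal C * ennreal (a powr -p)" using C by (simp add: ennreal_mult)
        also have "\<dots> \<le> ennreal C * (\<integral>\<^sup>+ s. K s l \<partial>lborel)" using R by (rule mult_left_mono) simp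
        finally show ?thesis unfolding L .
      qed
    qed
  qed
  also have "\<dots> = ennreal C * (\<integral>\<^sup>+ l. (\<integral>\<^sup>+ s. K s l \<partial>lborel) \<partial>lborel)"
  proof (rule nn_integral_cmult)
    have "(\<lambda>(l, s). K s l) = (\<lambda>ls. indicator {s0<..} (snd ls) * ennreal (p * snd ls powr (-1-p)) * (if 0 \<le> fst ls \<and> fst ls < Gm (snd ls) then 1 else 0))"
      by (auto simp: K_def indicator_def fun_eq_iff)
    also have "\<dots> \<in> borel_measurable (lborel \<Otimes>\<^sub>M lborel)" by measurable
    finally have KM: "(\<lambda>(l, s). K s l) \<in> borel_measurable (lborel \<Otimes>\<^sub>M lborel)" .
    show "(\<lambda>l. \<integral>\<^sup>+ s. K s l \<partial>lborel) \<in> borel_measurable lborel"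
      using lborel.borel_measurable_nn_integral[of "\<lambda>l s. K s l", OF KM] by simp
  qed
  also have "(\<integral>\<^sup>+ l. (\<integral>\<^sup>+ s. K s l \<partial>lborel) \<partial>lborel) = (\<integral>\<^sup>+ s. (\<integral>\<^sup>+ l. K s l \<partial>lborel) \<partial>lborel)"
  proof (rule lborel_pair.Fubini')
    have "(\<lambda>(s, l). K s l) = (\<lambda>sl. indicator {s0<..} (fst sl) * ennreal (p * fst sl powr (-1-p)) * (if 0 \<le> snd sl \<and> snd sl < Gm (fst sl) then 1 else 0))"
      by (auto simp: K_def indicator_def fun_eq_iff)
    also have "\<dots> \<in> borel_measurable (lborel \<Otimes>\<^sub>M lborel)" by measurable
    finally show "(\<lambda>(s, l). K s l) \<in> borel_measurable (lborel \<Otimes>\<^sub>M lborel)" .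
  qed
  also have "\<dots> = (\<integral>\<^sup>+ s. ennreal p * (indicator {s0<..} s * ennreal (s powr (-1-p) * Gm s)) \<partial>lborel)"
  proof (rule nn_integral_cong)
    fix s :: real
    have "(\<integral>\<^sup>+ l. K s l \<partial>lborel) = indicator {s0<..} s * ennreal (p * s powr (-1-p)) * (\<integral>\<^sup>+ l. indicator {0..<Gm s} l \<partial>lborel)"
      unfolding K_def by (rule nn_integral_cmult) simp
    also have "(\<integral>\<^sup>+ l. indicator {0..<Gm s} l \<partial>lborel) = ennreal (Gm s)" using G0[of s] by simp
    also have "indicator {s0<..} s * ennreal (p * s powr (-1-p)) * ennreal (Gm s) = ennreal p * (indicator {s0<..} s * ennreal (s powr (-1-p) * Gm s))"
      using G0[of s] p by (simp add: indicator_def ennreal_mult[symmetric] mult.assoc)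
    finally show "(\<integral>\<^sup>+ l. K s l \<partial>lborel) = ennreal p * (indicator {s0<..} s * ennreal (s powr (-1-p) * Gm s))" .
  qed
  also have "\<dots> = ennreal p * (\<integral>\<^sup>+ s. indicator {s0<..} s * ennreal (s powr (-1-p) * Gm s) \<partial>lborel)"
    by (rule nn_integral_cmult) simp
  finally show ?thesis using p C by (simp add: ennreal_mult mult.assoc mult.commute mult.left_commute)
qed

theorem lemma2p6:
  fixes \<Omega> :: "'a::euclidean_space set"
    and \<phi> :: "'a \<Rightarrow> real"
    and g :: "real \<Rightarrow> real \<Rightarrow> real"
    and u v :: "'a \<Rightarrow> real"
    and p q C\<^sub>u C\<^sub>v s\<^sub>0 :: real
  assumes dim: "DIM('a) \<ge> 3"
    and \<Omega>: "open \<Omega>" "bounded \<Omega>"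
    and \<phi>_meas: "set_borel_measurable lebesgue \<Omega> \<phi>"
    and \<phi>_pos: "\<forall>x\<in>\<Omega>. \<phi> x > 0"
    and g_nonneg: "\<forall>a b. b \<ge> 0 \<longrightarrow> g a b \<ge> 0"
    and g_mono1: "\<forall>a a' b. b \<ge> 0 \<longrightarrow> a \<le> a' \<longrightarrow> g a b \<le> g a' b"
    and g_mono2: "\<forall>a b b'. 0 \<le> b \<longrightarrow> b \<le> b' \<longrightarrow> g a b \<le> g a b'"
    and g_lip1: "\<forall>b\<ge>0. loc_lipschitz_on UNIV (\<lambda>a. g a b)"
    and g_lip2: "\<forall>a. loc_lipschitz_on {0..} (\<lambda>b. g a b)"
    and g00: "g 0 0 = 0"
    and pq: "p > 0" "q > 0"
    and g_int: "(\<integral>\<^sup>+ s \<in> {1..}. ennreal (s powr (-1 - p) * g s (s powr (p / q))) \<partial>lborel) < \<infinity>"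
    and u_meas: "set_borel_measurable lebesgue \<Omega> u"
    and v_meas: "set_borel_measurable lebesgue \<Omega> v"
    and v_nonneg: "\<forall>x\<in>\<Omega>. v x \<ge> 0"
    and C: "C\<^sub>u > 0" "C\<^sub>v > 0"
    and eu: "\<forall>s>0. eset \<Omega> \<phi> u s \<le> ennreal (C\<^sub>u * s powr (-p))"
    and ev: "\<forall>s>0. eset \<Omega> \<phi> v s \<le> ennreal (C\<^sub>v * s powr (-q))"
    and s0: "s\<^sub>0 > 0"
  shows "(\<integral>\<^sup>+ x \<in> \<Omega>. ennreal (\<bar>g (u x) (v x)\<bar> * \<phi> x) \<partial>lebesgue)
    \<le> (\<integral>\<^sup>+ x \<in> (\<Omega> - Eset \<Omega> u s\<^sub>0) \<inter> (\<Omega> - Eset \<Omega> v (s\<^sub>0 powr (p / q))).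
           ennreal (g (u x) (v x) * \<phi> x) \<partial>lebesgue)
      + ennreal (2 * p * (C\<^sub>u + C\<^sub>v))
        * (\<integral>\<^sup>+ s \<in> {s\<^sub>0..}. ennreal (s powr (-1 - p) * g s (s powr (p / q))) \<partial>lborel)"
  proof -
  have Om: "\<Omega> \<in> sets lebesgue" using \<Omega> by (intro fmeasurableD lmeasurable_open) auto
  define ut where "ut x = indicator \<Omega> x * u x" for x
  define vt where "vt x = indicator \<Omega> x * v x" for x
  define pt where "pt x = indicator \<Omega> x * \<phi> x" for x
  have utm[measurable]: "ut \<in> borel_measurable lebesgue" using u_meas unfolding ut_def set_borel_measurable_def by simp
  have vtm[measurable]: "vt \<in> borel_measurable lebesgue" using v_meas unfolding vt_def set_borel_measurable_def by simp
  have ptm[measurable]: "pt \<in> borel_measurable lebesgue" using \<phi>_meas unfolding pt_def set_borel_measurable_def by simp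
  have Om'[measurable]: "\<Omega> \<in> sets lebesgue" by (rule Om)
  define r where "r = p / q"
  have r0: "r > 0" using pq unfolding r_def by simp
  define w where "w x = max \<bar>ut x\<bar> (vt x powr (q / p))" for x
  have wm[measurable]: "w \<in> borel_measurable lebesgue" unfolding w_def by measurable
  define Gm where "Gm t = g (max s\<^sub>0 t) ((max s\<^sub>0 t) powr r)" for t
  have Gmono: "mono Gm"
  proof (rule monoI)
    fix t t' :: real assume "t \<le> t'"
    then have m: "max s\<^sub>0 t \<le> max s\<^sub>0 t'" "0 \<le> max s\<^sub>0 t" using s0 by auto
    have "g (max s\<^sub>0 t) ((max s\<^sub>0 t) powr r) \<le> g (max s\<^sub>0 t') ((max s\<^sub>0 t) powr r)"
      using g_mono1 m by simp
    also have "\<dots> \<le> g (max s\<^sub>0 t') ((max s\<^sub>0 t') powr r)"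
      using g_mono2 m r0 by (simp add: powr_mono2)
    finally show "Gm t \<le> Gm t'" unfolding Gm_def .
  qed
  have G0: "Gm t \<ge> 0" for t unfolding Gm_def using g_nonneg by simp
  have vback: "v x = (v x powr (q / p)) powr r" if "x \<in> \<Omega>" for x
    using v_nonneg that pq unfolding r_def by (simp add: powr_powr)
  define S where "S = {x \<in> \<Omega>. w x > s\<^sub>0}"
  have Sm: "S \<in> sets lebesgue"
  proof -
    have "S = {x \<in> space lebesgue. x \<in> \<Omega> \<and> w x > s\<^sub>0}" unfolding S_def by simp
    also have "\<dots> \<in> sets lebesgue" by measurable
    finally show ?thesis .
  qed
  have Esm: "Eset \<Omega> u b \<in> sets lebesgue" "Eset \<Omega> v b \<in> sets lebesgue" for b
  proof -
    have "Eset \<Omega> u b = {x \<in> space lebesgue. x \<in> \<Omega> \<and> \<bar>ut x\<bar> > b}" unfolding Eset_def ut_def by auto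
    also have "\<dots> \<in> sets lebesgue" by measurable
    finally show "Eset \<Omega> u b \<in> sets lebesgue" .
    have "Eset \<Omega> v b = {x \<in> space lebesgue. x \<in> \<Omega> \<and> \<bar>vt x\<bar> > b}" unfolding Eset_def vt_def by auto
    also have "\<dots> \<in> sets lebesgue" by measurable
    finally show "Eset \<Omega> v b \<in> sets lebesgue" .
  qed
  have tail: "(\<integral>\<^sup>+ x. indicator S x * ennreal (pt x) * indicator {x. w x > b} x \<partial>lebesgue) \<le> ennreal ((C\<^sub>u + C\<^sub>v) * b powr -p)"
    if b: "b > 0" for b
  proof -
    have "(\<integral>\<^sup>+ x. indicator S x * ennreal (pt x) * indicator {x. w x > b} x \<partial>lebesgue)
      \<le> (\<integral>\<^sup>+ x. ennreal (pt x) * indicator (Eset \<Omega> u b) x + ennreal (pt x) * indicator (Eset \<Omega> v (b powr r)) x \<partial>lebesgue)"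
    proof (rule nn_integral_mono)
      fix x
      show "indicator S x * ennreal (pt x) * indicator {x. w x > b} x \<le> ennreal (pt x) * indicator (Eset \<Omega> u b) x + ennreal (pt x) * indicator (Eset \<Omega> v (b powr r)) x"
      proof (cases "x \<in> S \<and> w x > b")
        case True
        then have xO: "x \<in> \<Omega>" unfolding S_def by auto
        have "\<bar>u x\<bar> > b \<or> v x > b powr r"
        proof (cases "\<bar>u x\<bar> > b")
          case False
          then have "v x powr (q / p) > b" using True xO unfolding w_def ut_def vt_def by auto
          then have "b powr r < (v x powr (q / p)) powr r" using b r0 by (intro powr_less_mono2) auto
          then show ?thesis using vback[OF xO] by simp
        qed simp
        then show ?thesis using True xO by (auto simp: Eset_def indicator_def)
      qed (auto simp: indicator_def)
    qed
    also have "\<dots> = (\<integral>\<^sup>+ x. ennreal (pt x) * indicator (Eset \<Omega> u b) x \<partial>lebesgue) + (\<integral>\<^sup>+ x. ennreal (pt x) * indicator (Eset \<Omega> v (b powr r)) x \<partial>lebesgue)"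
      using Esm by (intro nn_integral_add) auto
    also have "(\<integral>\<^sup>+ x. ennreal (pt x) * indicator (Eset \<Omega> u b) x \<partial>lebesgue) = eset \<Omega> \<phi> u b"
      unfolding eset_def by (intro nn_integral_cong) (auto simp: pt_def Eset_def indicator_def)
    also have "(\<integral>\<^sup>+ x. ennreal (pt x) * indicator (Eset \<Omega> v (b powr r)) x \<partial>lebesgue) = eset \<Omega> \<phi> v (b powr r)"
      unfolding eset_def by (intro nn_integral_cong) (auto simp: pt_def Eset_def indicator_def)
    also have "eset \<Omega> \<phi> u b + eset \<Omega> \<phi> v (b powr r) \<le> ennreal (C\<^sub>u * b powr (-p)) + ennreal (C\<^sub>v * (b powr r) powr (-q))"
      using eu ev b by (intro add_mono) auto
    also have "(b powr r) powr (-q) = b powr (-p)" using pq unfolding r_def by (simp add: powr_powr)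
    also have "ennreal (C\<^sub>u * b powr (-p)) + ennreal (C\<^sub>v * b powr (-p)) = ennreal ((C\<^sub>u + C\<^sub>v) * b powr -p)"
      using C by (simp add: ennreal_plus[symmetric] distrib_right del: ennreal_plus)
    finally show ?thesis .
  qed
  have LB: "(\<integral>\<^sup>+ x. indicator S x * ennreal (Gm (w x) * pt x) \<partial>lebesgue)
     \<le> ennreal (p * (C\<^sub>u + C\<^sub>v)) * (\<integral>\<^sup>+ s. indicator {s\<^sub>0<..} s * ennreal (s powr (-1-p) * Gm s) \<partial>lborel)"
  proof (rule layer_bound[OF wm ptm Sm _ _ Gmono G0 s0 pq(1)])
    show "\<And>x. x \<in> S \<Longrightarrow> 0 \<le> pt x" using \<phi>_pos by (auto simp: S_def pt_def less_imp_le)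
    show "\<And>x. x \<in> S \<Longrightarrow> s\<^sub>0 < w x" by (auto simp: S_def)
    show "0 \<le> C\<^sub>u + C\<^sub>v" using C by simp
  qed (rule tail)
  define A where "A = (\<Omega> - Eset \<Omega> u s\<^sub>0) \<inter> (\<Omega> - Eset \<Omega> v (s\<^sub>0 powr (p / q)))"
  have Am: "A \<in> sets lebesgue" unfolding A_def using Esm Om by auto
  have main: "(\<integral>\<^sup>+ x \<in> \<Omega>. ennreal (\<bar>g (u x) (v x)\<bar> * \<phi> x) \<partial>lebesgue)
     \<le> (\<integral>\<^sup>+ x. ennreal (g (u x) (v x) * \<phi> x) * indicator A x \<partial>lebesgue)
       + (\<integral>\<^sup>+ x. indicator S x * ennreal (Gm (w x) * pt x) \<partial>lebesgue)"
  proof (rule nn_integral_split_nonmeas)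
    show "A \<in> sets lebesgue" by (rule Am)
    show "(\<lambda>x. indicator S x * ennreal (Gm (w x) * pt x)) \<in> borel_measurable lebesgue"
      using Sm borel_measurable_mono[OF Gmono] by measurable
    fix x
    show "ennreal (\<bar>g (u x) (v x)\<bar> * \<phi> x) * indicator \<Omega> x
      \<le> ennreal (g (u x) (v x) * \<phi> x) * indicator A x + indicator (space lebesgue - A) x * (indicator S x * ennreal (Gm (w x) * pt x))"
    proof (cases "x \<in> \<Omega>")
      case xO: True
      have v0: "v x \<ge> 0" using v_nonneg xO by simp
      have gabs: "\<bar>g (u x) (v x)\<bar> = g (u x) (v x)" using g_nonneg v0 by simp
      show ?thesis
      proof (cases "x \<in> A")
        case True then show ?thesis using xO gabs by (auto simp: indicator_def)
      next
        case False
        have wx: "w x > s\<^sub>0"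
        proof (cases "\<bar>u x\<bar> > s\<^sub>0")
          case True then show ?thesis using xO by (auto simp: w_def ut_def)
        next
          case nu: False
          then have "v x > s\<^sub>0 powr r" using False xO v0 unfolding A_def Eset_def r_def by auto
          then have "v x powr (q / p) > (s\<^sub>0 powr r) powr (q / p)" using s0 pq by (intro powr_less_mono2) auto
          moreover have "(s\<^sub>0 powr r) powr (q / p) = s\<^sub>0" using s0 pq unfolding r_def by (simp add: powr_powr)
          ultimately show ?thesis using xO by (auto simp: w_def vt_def)
        qed
        then have xS: "x \<in> S" using xO by (auto simp: S_def)
        have "g (u x) (v x) \<le> g (w x) (v x)"
          using g_mono1 v0 xO by (auto simp: w_def ut_def)
        also have "\<dots> \<le> g (w x) ((w x) powr r)"
        proof -
          have "v x powr (q / p) \<le> w x" using xO by (auto simp: w_def vt_def)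
          then have "(v x powr (q / p)) powr r \<le> (w x) powr r" using r0 by (intro powr_mono2) auto
          then have "v x \<le> (w x) powr r" using vback[OF xO] by simp
          then show ?thesis using g_mono2 v0 by simp
        qed
        also have "\<dots> = Gm (w x)" unfolding Gm_def using wx by simp
        finally have "g (u x) (v x) * \<phi> x \<le> Gm (w x) * pt x"
          using \<phi>_pos xO by (auto simp: pt_def intro: mult_right_mono less_imp_le)
        then show ?thesis using xO xS False gabs by (auto simp: indicator_def intro: ennreal_leI)
      qed
    qed (simp add: indicator_def)
  qed
  also have "\<dots> \<le> (\<integral>\<^sup>+ x. ennreal (g (u x) (v x) * \<phi> x) * indicator A x \<partial>lebesgue)
      + ennreal (2 * p * (C\<^sub>u + C\<^sub>v)) * (\<integral>\<^sup>+ s \<in> {s\<^sub>0..}. ennreal (s powr (-1 - p) * g s (s powr (p / q))) \<partial>lborel)"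
  proof (intro add_mono order.refl order.trans[OF LB] mult_mono)
    show "ennreal (p * (C\<^sub>u + C\<^sub>v)) \<le> ennreal (2 * p * (C\<^sub>u + C\<^sub>v))"
      using pq C by (intro ennreal_leI) auto
    show "(\<integral>\<^sup>+ s. indicator {s\<^sub>0<..} s * ennreal (s powr (-1-p) * Gm s) \<partial>lborel)
      \<le> (\<integral>\<^sup>+ s \<in> {s\<^sub>0..}. ennreal (s powr (-1 - p) * g s (s powr (p / q))) \<partial>lborel)"
      by (intro nn_integral_mono) (auto simp: indicator_def Gm_def r_def)
  qed auto
  finally show ?thesis unfolding A_def .
qed

end
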